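(* Let $(D,v^* )$ be an instance of TFP that is special with respect to $a^*\in N_{\mathrm{out}}(v^* )$ and $b^*\in N_{\mathrm{in}}(v^* )$, and let $m=|N_{\mathrm{in}}(v^* )|=2^p$ (so $|V(D)|=4m=2^{p+2}$ and the knockout tournament has $p+2$ rounds). Write $A=N_{\mathrm{out}}(v^* )$ and $B=N_{\mathrm{in}}(v^* )$. Suppose $(D,v^* )$ is a yes-instance, let $\sigma$ be an arbitrary winning seeding for $v^*$, and let $\{M_1,\dots,M_{p+2}\}$ be its match set sequence. Then: (1) $V(M_{p+1})\cap B=\{b^*\}$; (2) $|V(M_{p+1})\cap A|=2$ and $a^*\in V(M_{p+1})$; (3) for every round $r\in\{1,\dots,p\}$, every match in $M_r$ is played either between two players of $A\cup\{v^*\}$ or between two players of $B$.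
   Context: A tournament is a digraph $D=(V,E)$ in which for every pair of distinct vertices $u,v$ exactly one of the arcs $(u,v),(v,u)$ is present; $(u,v)\in E$ means $u$ beats $v$. $N_{\mathrm{out}}(v)=\{u:(v,u)\in E\}$, $N_{\mathrm{in}}(v)=\{u:(u,v)\in E\}$. A knockout tournament on $n=2^c$ players is a complete binary tree with $n$ leaves; a seeding is a bijection from players to leaves; in each of the $\log_2 n$ rounds the winners of sibling subtrees play each other and the winner (according to $D$) advances; the last remaining player is the champion. A seeding is winning for $v^*$ if $v^*$ is the champion. The Tournament Fixing Problem (TFP): given a tournament $D$ with $|V(D)|$ a power of two and $v^*\in V(D)$, decide whether a winning seeding for $v^*$ exists; $(D,v^* )$ is a yes-instance if so. For a seeding, the match set $M_r\subseteq E(D)$ of round $r$ is the set of arcs $(u,v)$ such that $u$ beat $v$ in round $r$, and $V(M_r)$ is the set of players participating in round $r$; $\{M_1,\dots,M_{\log n}\}$ is the match set sequence. An instance $(D,v^* )$ is special with respect to $a^*\in N_{\mathrm{out}}(v^* )$ and $b^*\in N_{\mathrm{in}}(v^* )$ if: (i) $|N_{\mathrm{out}}(v^* )|=3|N_{\mathrm{in}}(v^* )|-1$ and $|N_{\mathrm{in}}(v^* )|=2^p$ for some integer $p\ge 0$; (ii) $(a^*,b^* )\in E(D)$; (iii) for every $a\in N_{\mathrm{out}}(v^* )$ and $b\in N_{\mathrm{in}}(v^* )$ with $(a,b)\neq(a^*,b^* )$, we have $(b,a)\in E(D)$. *)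

theory Defs
  imports Main
begin

text \<open>A tournament on the finite vertex set V with arc set E; (u,v) in E means u beats v.\<close>
definition tournament :: "'a set \<Rightarrow> ('a \<times> 'a) set \<Rightarrow> bool" where
  "tournament V E \<longleftrightarrow> finite V \<and> E \<subseteq> V \<times> V \<and>
     (\<forall>u\<in>V. \<forall>w\<in>V. u \<noteq> w \<longrightarrow> ((u,w) \<in> E \<longleftrightarrow> (w,u) \<notin> E)) \<and>
     (\<forall>u\<in>V. (u,u) \<notin> E)"

definition N_out :: "('a \<times> 'a) set \<Rightarrow> 'a \<Rightarrow> 'a set" where
  "N_out E v = {u. (v,u) \<in> E}"

definition N_in :: "('a \<times> 'a) set \<Rightarrow> 'a \<Rightarrow> 'a set" where
  "N_in E v = {u. (u,v) \<in> E}"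

definition TFP_instance :: "'a set \<Rightarrow> ('a \<times> 'a) set \<Rightarrow> 'a \<Rightarrow> bool" where
  "TFP_instance V E v \<longleftrightarrow> tournament V E \<and> (\<exists>c. card V = 2 ^ c) \<and> v \<in> V"

definition match_winner :: "('a \<times> 'a) set \<Rightarrow> 'a \<Rightarrow> 'a \<Rightarrow> 'a" where
  "match_winner E u w = (if (u,w) \<in> E then u else w)"

text \<open>A seeding is represented by the map s from leaf positions 0..<n (left to right in the
  complete binary tree) to players; it is a seeding iff it is a bijection onto V.
  ko_win E s j k is the player that has won the subtree at height j with index k,
  i.e. whose leaves are k*2^j ..< (k+1)*2^j.\<close>
fun ko_win :: "('a \<times> 'a) set \<Rightarrow> (nat \<Rightarrow> 'a) \<Rightarrow> nat \<Rightarrow> nat \<Rightarrow> 'a" where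
  "ko_win E s 0 k = s k"
| "ko_win E s (Suc j) k = match_winner E (ko_win E s j (2*k)) (ko_win E s j (2*k+1))"

definition seeding :: "'a set \<Rightarrow> (nat \<Rightarrow> 'a) \<Rightarrow> bool" where
  "seeding V s \<longleftrightarrow> bij_betw s {0..<card V} V"

definition winning_seeding :: "'a set \<Rightarrow> ('a \<times> 'a) set \<Rightarrow> 'a \<Rightarrow> (nat \<Rightarrow> 'a) \<Rightarrow> bool" where
  "winning_seeding V E v s \<longleftrightarrow> seeding V s \<and> (\<exists>c. card V = 2 ^ c \<and> ko_win E s c 0 = v)"

definition yes_instance :: "'a set \<Rightarrow> ('a \<times> 'a) set \<Rightarrow> 'a \<Rightarrow> bool" where
  "yes_instance V E v \<longleftrightarrow> (\<exists>s. winning_seeding V E v s)"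

definition match_set :: "('a \<times> 'a) set \<Rightarrow> (nat \<Rightarrow> 'a) \<Rightarrow> nat \<Rightarrow> nat \<Rightarrow> ('a \<times> 'a) set" where
  "match_set E s n r =
     {(let u = ko_win E s (r-1) (2*k); w = ko_win E s (r-1) (2*k+1)
       in if (u,w) \<in> E then (u,w) else (w,u)) | k. k < n div 2 ^ r}"

definition match_players :: "('a \<times> 'a) set \<Rightarrow> 'a set" where
  "match_players M = fst ` M \<union> snd ` M"

definition special :: "'a set \<Rightarrow> ('a \<times> 'a) set \<Rightarrow> 'a \<Rightarrow> 'a \<Rightarrow> 'a \<Rightarrow> bool" where
  "special V E v a b \<longleftrightarrow>
     a \<in> N_out E v \<and> b \<in> N_in E v \<and>
     card (N_out E v) = 3 * card (N_in E v) - 1 \<and> (\<exists>p. card (N_in E v) = 2 ^ p) \<and>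
     (a,b) \<in> E \<and>
     (\<forall>a'\<in>N_out E v. \<forall>b'\<in>N_in E v. (a',b') \<noteq> (a,b) \<longrightarrow> (b',a') \<in> E)"

end

theory Submission imports Defs begin

definition leaves :: "(nat \<Rightarrow> 'a) \<Rightarrow> nat \<Rightarrow> nat \<Rightarrow> 'a set" where
  "leaves s j k = s ` {k*2^j..<(k+1)*2^j}"

lemma leaves_Suc: "leaves s (Suc j) k = leaves s j (2*k) \<union> leaves s j (2*k+1)"
proof -
  have "{k*2^(Suc j)..<(k+1)*2^(Suc j)} = {(2*k)*2^j..<(2*k+1)*2^j} \<union> {(2*k+1)*2^j..<(2*k+1+1)*2^j}"
    by (auto simp: algebra_simps)
  then show ?thesis unfolding leaves_def by (simp add: image_Un)
qed

lemma ko_win_Suc_in: "ko_win E s (Suc j) k \<in> {ko_win E s j (2*k), ko_win E s j (2*k+1)}"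
  by (simp add: match_winner_def)

lemma ko_win_in: "ko_win E s j k \<in> leaves s j k"
proof (induction j arbitrary: k)
  case 0 then show ?case by (simp add: leaves_def)
next
  case (Suc j)
  then show ?case using ko_win_Suc_in[of E s j k] leaves_Suc[of s j k] by auto
qed

lemma leaves_up: "leaves s i q \<subseteq> leaves s (Suc i) (q div 2)"
proof -
  have "q = 2*(q div 2) \<or> q = 2*(q div 2) + 1" by presburger
  then show ?thesis using leaves_Suc[of s i "q div 2"] by (metis Un_upper1 Un_upper2)
qed

lemma leaves_mono: "leaves s i q \<subseteq> leaves s (i+d) (q div 2^d)"
proof (induction d)
  case 0 then show ?case by simp
next
  case (Suc d)
  have "q div 2^d div 2 = q div 2^(Suc d)" by (metis div_mult2_eq power_Suc2)
  then show ?case using Suc leaves_up[of s "i+d" "q div 2^d"] by auto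
qed

lemma leaves_disj:
  assumes "inj_on s {0..<n}" "t \<noteq> q" "(t+1)*2^j \<le> n" "(q+1)*2^j \<le> n"
  shows "leaves s j t \<inter> leaves s j q = {}"
proof -
  have d: "{t*2^j..<(t+1)*2^j} \<inter> {q*2^j..<(q+1)*2^j} = {}"
  proof (rule ccontr)
    assume "\<not> ?thesis"
    then obtain x where "x \<in> {t*2^j..<(t+1)*2^j} \<inter> {q*2^j..<(q+1)*2^j}" by blast
    then have x: "t*2^j \<le> x" "x < (t+1)*2^j" "q*2^j \<le> x" "x < (q+1)*2^j" by auto
    show False
    proof (cases "t < q")
      case True
      then have "(t+1)*2^j \<le> q*2^j" by (intro mult_le_mono1) simp
      then show False using x by simp
    next
      case False
      then have "q < t" using assms(2) by simp
      then have "(q+1)*2^j \<le> t*2^j" by (intro mult_le_mono1) simp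
      then show False using x by simp
    qed
  qed
  have "s ` ({t*2^j..<(t+1)*2^j} \<inter> {q*2^j..<(q+1)*2^j}) = leaves s j t \<inter> leaves s j q"
    unfolding leaves_def using assms by (intro inj_on_image_Int[OF assms(1)]) auto
  then show ?thesis using d by (metis image_empty)
qed

lemma leaves_card:
  assumes "inj_on s {0..<n}" "(q+1)*2^j \<le> n"
  shows "card (leaves s j q) = 2^j"
proof -
  have "inj_on s {q*2^j..<(q+1)*2^j}" using assms by (rule_tac inj_on_subset) auto
  then show ?thesis unfolding leaves_def by (simp add: card_image algebra_simps)
qed

lemma leaves_sub:
  assumes "s ` {0..<n} = V" "(q+1)*2^j \<le> n"
  shows "leaves s j q \<subseteq> V"
  unfolding leaves_def using assms by auto

lemma mp_eq: "match_players (match_set E s n r) = (\<lambda>i. ko_win E s (r-1) i) ` {..<2*(n div 2^r)}"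
proof
  show "match_players (match_set E s n r) \<subseteq> (\<lambda>i. ko_win E s (r-1) i) ` {..<2*(n div 2^r)}"
    unfolding match_players_def match_set_def by (auto simp: Let_def split: if_splits)
next
  show "(\<lambda>i. ko_win E s (r-1) i) ` {..<2*(n div 2^r)} \<subseteq> match_players (match_set E s n r)"
  proof
    fix x assume "x \<in> (\<lambda>i. ko_win E s (r-1) i) ` {..<2*(n div 2^r)}"
    then obtain i where i: "i < 2*(n div 2^r)" "x = ko_win E s (r-1) i" by auto
    define k where "k = i div 2"
    have k: "k < n div 2^r" using i unfolding k_def by simp
    have "i = 2*k \<or> i = 2*k+1" unfolding k_def by presburger
    then show "x \<in> match_players (match_set E s n r)"
      unfolding match_players_def match_set_def using k i
      by (auto simp: Let_def image_def split: if_splits; blast)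
  qed
qed

lemma keyQ:
  assumes inj: "inj_on s {0..<n}" and img: "s ` {0..<n} = V"
    and hB: "\<And>x y. x \<in> B \<Longrightarrow> y \<in> V \<Longrightarrow> y \<notin> B \<Longrightarrow> (y,x) \<in> E \<Longrightarrow> y = a \<and> x = b"
    and tot: "\<And>x y. x \<in> V \<Longrightarrow> y \<in> V \<Longrightarrow> x \<noteq> y \<Longrightarrow> (x,y) \<notin> E \<Longrightarrow> (y,x) \<in> E"
  shows "(k+1)*2^j \<le> n \<Longrightarrow> ko_win E s j k \<notin> B \<Longrightarrow> leaves s j k \<inter> B \<noteq> {} \<Longrightarrow>
    \<exists>i q. i < j \<and> q div 2^(j-i) = k \<and> ko_win E s i q = b \<and> ko_win E s (Suc i) (q div 2) = a
       \<and> leaves s j k \<inter> B \<subseteq> leaves s i q \<and> b \<in> leaves s j k"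
proof (induction j arbitrary: k)
  case 0
  then show ?case using ko_win_in[of E s 0 k] by (simp add: leaves_def)
next
  case (Suc j)
  define W0 where "W0 = ko_win E s j (2*k)"
  define W1 where "W1 = ko_win E s j (2*k+1)"
  have r0: "(2*k+1)*2^j \<le> n" and r1: "(2*k+1+1)*2^j \<le> n" using Suc.prems(1) by (simp_all add: algebra_simps)
  have W0L: "W0 \<in> leaves s j (2*k)" unfolding W0_def by (rule ko_win_in)
  have W1L: "W1 \<in> leaves s j (2*k+1)" unfolding W1_def by (rule ko_win_in)
  have W0V: "W0 \<in> V" using W0L leaves_sub[OF img r0] by auto
  have W1V: "W1 \<in> V" using W1L leaves_sub[OF img r1] by auto
  have disj: "leaves s j (2*k) \<inter> leaves s j (2*k+1) = {}"
    using leaves_disj[OF inj _ r0 r1] by auto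
  have LU: "leaves s (Suc j) k = leaves s j (2*k) \<union> leaves s j (2*k+1)" by (rule leaves_Suc)
  have W: "ko_win E s (Suc j) k = match_winner E W0 W1" unfolding W0_def W1_def by simp
  have d0: "(2*k) div 2 = k" and d1: "(2*k+1) div 2 = k" by auto
  have IH0: "ko_win E s j (2*k) \<notin> B \<Longrightarrow> leaves s j (2*k) \<inter> B \<noteq> {} \<Longrightarrow>
    \<exists>i q. i < j \<and> q div 2^(j-i) = 2*k \<and> ko_win E s i q = b \<and> ko_win E s (Suc i) (q div 2) = a
       \<and> leaves s j (2*k) \<inter> B \<subseteq> leaves s i q \<and> b \<in> leaves s j (2*k)"
    using Suc.IH[OF r0] .
  have IH1: "ko_win E s j (2*k+1) \<notin> B \<Longrightarrow> leaves s j (2*k+1) \<inter> B \<noteq> {} \<Longrightarrow>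
    \<exists>i q. i < j \<and> q div 2^(j-i) = 2*k+1 \<and> ko_win E s i q = b \<and> ko_win E s (Suc i) (q div 2) = a
       \<and> leaves s j (2*k+1) \<inter> B \<subseteq> leaves s i q \<and> b \<in> leaves s j (2*k+1)"
    using Suc.IH[OF r1] .
  have lift: "\<exists>i q. i < Suc j \<and> q div 2^(Suc j-i) = k \<and> ko_win E s i q = b \<and> ko_win E s (Suc i) (q div 2) = a
       \<and> leaves s (Suc j) k \<inter> B \<subseteq> leaves s i q \<and> b \<in> leaves s (Suc j) k"
    if "i \<le> j" "q div 2^(j-i) = kk" "kk div 2 = k" "ko_win E s i q = b" "ko_win E s (Suc i) (q div 2) = a"
       "leaves s (Suc j) k \<inter> B \<subseteq> leaves s i q" "b \<in> leaves s (Suc j) k" for i q kk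
  proof -
    have "Suc j - i = Suc (j - i)" using that(1) by simp
    then have "q div 2^(Suc j-i) = k" using that(2,3) by (metis div_mult2_eq power_Suc2)
    then show ?thesis using that by (intro exI[of _ i] exI[of _ q]) auto
  qed
  show ?case
  proof (cases "W0 \<in> B")
    case True
    then have "W1 \<notin> B" using W Suc.prems(2) by (auto simp: match_winner_def split: if_splits)
    moreover have nE: "(W0,W1) \<notin> E" using True W Suc.prems(2) by (auto simp: match_winner_def)
    ultimately have "(W1,W0) \<in> E" using tot W0V W1V True by metis
    then have ab: "W1 = a \<and> W0 = b" using hB True W1V \<open>W1 \<notin> B\<close> by blast
    have e1: "leaves s j (2*k+1) \<inter> B = {}"
    proof (rule ccontr)
      assume "leaves s j (2*k+1) \<inter> B \<noteq> {}"
      then have "b \<in> leaves s j (2*k+1)" using IH1 \<open>W1 \<notin> B\<close> unfolding W1_def by blast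
      then show False using disj W0L ab by auto
    qed
    show ?thesis
      apply (rule lift[of j "2*k" "2*k"])
      using ab e1 W0L LU W d0 nE unfolding W0_def W1_def
      by (auto simp: match_winner_def)
  next
    case False
    note nW0 = False
    show ?thesis
    proof (cases "W1 \<in> B")
      case True
      have "(W0,W1) \<in> E" using True W Suc.prems(2) by (auto simp: match_winner_def split: if_splits)
      then have ab: "W0 = a \<and> W1 = b" using hB True W0V nW0 by blast
      have e0: "leaves s j (2*k) \<inter> B = {}"
      proof (rule ccontr)
        assume "leaves s j (2*k) \<inter> B \<noteq> {}"
        then have "b \<in> leaves s j (2*k)" using IH0 nW0 unfolding W0_def by blast
        then show False using disj W1L ab by auto
      qed
      show ?thesis
        apply (rule lift[of j "2*k+1" "2*k+1"])
        using ab e0 W1L LU W d1 \<open>(W0,W1) \<in> E\<close> unfolding W0_def W1_def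
        by (auto simp: match_winner_def)
    next
      case False
      note nW1 = False
      show ?thesis
      proof (cases "leaves s j (2*k) \<inter> B = {}")
        case True
        then have ne: "leaves s j (2*k+1) \<inter> B \<noteq> {}" using Suc.prems(3) LU by auto
        obtain i q where iq: "i < j" "q div 2^(j-i) = 2*k+1" "ko_win E s i q = b" "ko_win E s (Suc i) (q div 2) = a"
          "leaves s j (2*k+1) \<inter> B \<subseteq> leaves s i q" "b \<in> leaves s j (2*k+1)"
          using IH1 nW1 ne unfolding W1_def by blast
        show ?thesis
          apply (rule lift[of i q "2*k+1"])
          using iq True LU d1 by auto
      next
        case False
        obtain i q where iq: "i < j" "q div 2^(j-i) = 2*k" "ko_win E s i q = b" "ko_win E s (Suc i) (q div 2) = a"
          "leaves s j (2*k) \<inter> B \<subseteq> leaves s i q" "b \<in> leaves s j (2*k)"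
          using IH0 nW0 False unfolding W0_def by blast
        have e1: "leaves s j (2*k+1) \<inter> B = {}"
        proof (rule ccontr)
          assume "leaves s j (2*k+1) \<inter> B \<noteq> {}"
          then have "b \<in> leaves s j (2*k+1)" using IH1 nW1 unfolding W1_def by blast
          then show False using disj iq(6) by auto
        qed
        show ?thesis
          apply (rule lift[of i q "2*k"])
          using iq e1 LU d0 by auto
      qed
    qed
  qed
qed

theorem lemma1:
  fixes V :: "'a set" and E :: "('a \<times> 'a) set" and v a b :: 'a
    and s :: "nat \<Rightarrow> 'a" and p :: nat
  assumes "TFP_instance V E v"
    and "special V E v a b"
    and "card (N_in E v) = 2 ^ p"
    and "yes_instance V E v"
    and "winning_seeding V E v s"
  shows "match_players (match_set E s (card V) (p+1)) \<inter> N_in E v = {b}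
    \<and> (card (match_players (match_set E s (card V) (p+1)) \<inter> N_out E v) = 2
         \<and> a \<in> match_players (match_set E s (card V) (p+1)))
    \<and> (\<forall>r\<in>{1..p}. \<forall>(x,y)\<in>match_set E s (card V) r.
           (x \<in> N_out E v \<union> {v} \<and> y \<in> N_out E v \<union> {v}) \<or> (x \<in> N_in E v \<and> y \<in> N_in E v))"
proof -
  define A where "A = N_out E v"
  define B where "B = N_in E v"
  define n where "n = card V"
  have tour: "tournament V E" and vV: "v \<in> V" using assms(1) unfolding TFP_instance_def by auto
  have T: "finite V \<and> E \<subseteq> V \<times> V \<and> (\<forall>u\<in>V. \<forall>w\<in>V. u \<noteq> w \<longrightarrow> ((u,w) \<in> E \<longleftrightarrow> (w,u) \<notin> E)) \<and> (\<forall>u\<in>V. (u,u) \<notin> E)"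
    using tour unfolding tournament_def .
  have finV: "finite V" using T[THEN conjunct1] .
  have EV: "E \<subseteq> V \<times> V" using T[THEN conjunct2, THEN conjunct1] .
  have T3: "\<forall>u\<in>V. \<forall>w\<in>V. u \<noteq> w \<longrightarrow> ((u,w) \<in> E \<longleftrightarrow> (w,u) \<notin> E)"
    using T[THEN conjunct2, THEN conjunct2, THEN conjunct1] .
  have T4: "\<forall>u\<in>V. (u,u) \<notin> E" using T[THEN conjunct2, THEN conjunct2, THEN conjunct2] .
  have antis: "(u,w) \<in> E \<longleftrightarrow> (w,u) \<notin> E" if "u \<in> V" "w \<in> V" "u \<noteq> w" for u w
    using T3 that by blast
  have irr: "(u,u) \<notin> E" for u
  proof
    assume h: "(u,u) \<in> E"
    then have "u \<in> V" using EV by blast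
    then show False using T4 h by blast
  qed
  have sp: "a \<in> A" "b \<in> B" "card A = 3 * card B - 1" "(a,b) \<in> E"
    "\<And>a' b'. a' \<in> A \<Longrightarrow> b' \<in> B \<Longrightarrow> (a',b') \<noteq> (a,b) \<Longrightarrow> (b',a') \<in> E"
  proof -
    have S: "a \<in> A \<and> b \<in> B \<and> card A = 3 * card B - 1 \<and> (\<exists>p. card B = 2 ^ p) \<and> (a,b) \<in> E \<and>
     (\<forall>a'\<in>A. \<forall>b'\<in>B. (a',b') \<noteq> (a,b) \<longrightarrow> (b',a') \<in> E)"
      using assms(2) unfolding special_def A_def B_def by simp
    show "a \<in> A" "b \<in> B" "card A = 3 * card B - 1" "(a,b) \<in> E" using S by simp_all
    show "\<And>a' b'. a' \<in> A \<Longrightarrow> b' \<in> B \<Longrightarrow> (a',b') \<noteq> (a,b) \<Longrightarrow> (b',a') \<in> E" using S by blast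
  qed
  have cB: "card B = 2^p" using assms(3) B_def by simp
  have AV: "A \<subseteq> V" and BV: "B \<subseteq> V" using EV unfolding A_def B_def N_out_def N_in_def by auto
  have AB: "A \<inter> B = {}"
  proof (rule ccontr)
    assume "A \<inter> B \<noteq> {}"
    then obtain x where x: "x \<in> A" "x \<in> B" by blast
    then have e: "(v,x) \<in> E" "(x,v) \<in> E" unfolding A_def B_def N_out_def N_in_def by auto
    then have "x \<noteq> v" using irr by auto
    moreover have "x \<in> V" using x(1) AV by blast
    ultimately have "(v,x) \<in> E \<longleftrightarrow> (x,v) \<notin> E" using antis[OF vV] by metis
    then show False using e by simp
  qed
  have vA: "v \<notin> A" and vB: "v \<notin> B" using irr unfolding A_def B_def N_out_def N_in_def by auto
  have Vdec: "V = insert v (A \<union> B)"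
  proof
    show "insert v (A \<union> B) \<subseteq> V" using vV AV BV by blast
    show "V \<subseteq> insert v (A \<union> B)"
    proof
      fix x assume x: "x \<in> V"
      show "x \<in> insert v (A \<union> B)"
      proof (cases "x = v")
        case False
        then have "(v,x) \<in> E \<or> (x,v) \<in> E" using antis[OF vV x] by blast
        then show ?thesis unfolding A_def B_def N_out_def N_in_def by blast
      qed simp
    qed
  qed
  have fA: "finite A" using finV AV by (rule finite_subset[rotated])
  have fB: "finite B" using finV BV by (rule finite_subset[rotated])
  have c1: "card (A \<union> B) = card A + card B" by (rule card_Un_disjoint[OF fA fB AB])
  have c2: "card (insert v (A \<union> B)) = Suc (card (A \<union> B))"
    using fA fB vA vB by (intro card_insert_disjoint) auto
  have "card V = Suc (card A + card B)" using Vdec c1 c2 by metis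
  also have "\<dots> = 4 * 2^p"
  proof -
    have "(1::nat) \<le> 2^p" by simp
    then show ?thesis using sp(3) cB by linarith
  qed
  finally have nV: "n = 2^(p+2)" unfolding n_def by (simp add: power_add)
  obtain c where sd: "bij_betw s {0..<n} V" and cc: "n = 2^c" and kc: "ko_win E s c 0 = v"
    using assms(5) unfolding winning_seeding_def seeding_def n_def by auto
  have "(2::nat)^c = 2^(p+2)" using cc nV by simp
  then have "c = p+2" using power_inject_exp[of "2::nat" c "p+2"] by simp
  then have kv: "ko_win E s (p+2) 0 = v" using kc by simp
  have inj: "inj_on s {0..<n}" and img: "s ` {0..<n} = V" using sd by (auto simp: bij_betw_def)
  have tot: "\<And>x y. x \<in> V \<Longrightarrow> y \<in> V \<Longrightarrow> x \<noteq> y \<Longrightarrow> (x,y) \<notin> E \<Longrightarrow> (y,x) \<in> E"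
    using antis by blast
  have rest: "\<And>x. x \<in> V \<Longrightarrow> x \<notin> B \<Longrightarrow> x \<in> A \<union> {v}" using Vdec by blast
  have hB: "\<And>x y. x \<in> B \<Longrightarrow> y \<in> V \<Longrightarrow> y \<notin> B \<Longrightarrow> (y,x) \<in> E \<Longrightarrow> y = a \<and> x = b"
  proof -
    fix x y assume h: "x \<in> B" "y \<in> V" "y \<notin> B" "(y,x) \<in> E"
    have xy: "x \<noteq> y" using h by auto
    have "y \<noteq> v"
    proof
      assume "y = v"
      then have "(v,x) \<in> E" "(x,v) \<in> E" using h unfolding B_def N_in_def by auto
      moreover have "x \<in> V" using BV h(1) by blast
      moreover have "x \<noteq> v" using h(1) vB by blast
      ultimately show False using antis[of x v] vV by blast
    qed
    then have "y \<in> A" using rest h by auto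
    show "y = a \<and> x = b"
    proof (rule ccontr)
      assume "\<not> (y = a \<and> x = b)"
      then have "(x,y) \<in> E" using sp(5)[OF \<open>y \<in> A\<close> h(1)] by auto
      then show False using antis[of x y] h BV xy by auto
    qed
  qed
  have LV: "leaves s (p+2) 0 = V" using img nV by (simp add: leaves_def)
  have Bne: "B \<noteq> {}" using cB by (metis card.empty power_not_zero zero_neq_numeral)
  have "\<exists>i q. i < p+2 \<and> q div 2^(p+2-i) = 0 \<and> ko_win E s i q = b \<and> ko_win E s (Suc i) (q div 2) = a
       \<and> leaves s (p+2) 0 \<inter> B \<subseteq> leaves s i q \<and> b \<in> leaves s (p+2) 0"
  proof (rule keyQ[OF inj img hB tot, where k=0 and j="p+2"])
    show "(0+1)*2^(p+2) \<le> n" using nV by simp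
    show "ko_win E s (p+2) 0 \<notin> B" using kv vB by simp
    show "leaves s (p+2) 0 \<inter> B \<noteq> {}" using LV BV Bne by (simp add: Int_absorb1)
  qed
  then obtain i q where iq: "i < p+2" "q div 2^(p+2-i) = 0" "ko_win E s i q = b"
    "ko_win E s (Suc i) (q div 2) = a" "B \<subseteq> leaves s i q"
    using LV BV by auto
  have "q < 2^(p+2-i)" using iq(2) by (simp add: div_eq_0_iff)
  then have "(q+1)*2^i \<le> 2^(p+2-i) * 2^i" by (intro mult_le_mono1) simp
  also have "\<dots> = 2^(p+2)" using iq(1) by (simp add: power_add[symmetric])
  finally have qr: "(q+1)*2^i \<le> n" using nV by simp
  have "card B \<le> card (leaves s i q)" using iq(5) by (intro card_mono) (auto simp: leaves_def)
  then have "2^p \<le> (2::nat)^i" using leaves_card[OF inj qr] cB by simp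
  then have pi: "p \<le> i" by simp
  have "i \<noteq> p+1"
  proof
    assume "i = p+1"
    then have "q < 2" using \<open>q < 2^(p+2-i)\<close> by simp
    then have "ko_win E s (p+2) 0 = a" using iq(4) \<open>i = p+1\<close> by simp
    then show False using kv sp(1) vA by simp
  qed
  then have ip: "i = p" using pi iq(1) by simp
  have q4: "q < 4" using \<open>q < 2^(p+2-i)\<close> ip by simp
  have LB: "leaves s p q = B"
  proof -
    have "card (leaves s p q) = card B" using leaves_card[OF inj qr] cB ip by simp
    moreover have "finite (leaves s p q)" by (simp add: leaves_def)
    ultimately show ?thesis using iq(5) ip card_subset_eq[of "leaves s p q" B] by simp
  qed
  have tr: "\<And>t. t < 4 \<Longrightarrow> (t+1)*2^p \<le> n"
  proof -
    fix t :: nat assume "t < 4"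
    then have "(t+1)*2^p \<le> 4*2^p" by (intro mult_le_mono1) simp
    then show "(t+1)*2^p \<le> n" using nV by (simp add: power_add)
  qed
  have other: "\<And>t. t < 4 \<Longrightarrow> t \<noteq> q \<Longrightarrow> leaves s p t \<subseteq> A \<union> {v} \<and> leaves s p t \<inter> B = {}"
  proof -
    fix t assume t: "t < 4" "t \<noteq> q"
    have "leaves s p t \<inter> B = {}" using leaves_disj[OF inj t(2) tr[OF t(1)] tr[OF q4]] LB by simp
    moreover have "leaves s p t \<subseteq> V" using leaves_sub[OF img tr[OF t(1)]] .
    ultimately show "leaves s p t \<subseteq> A \<union> {v} \<and> leaves s p t \<inter> B = {}" using rest by blast
  qed
  have part3': "(x \<in> A \<union> {v} \<and> y \<in> A \<union> {v}) \<or> (x \<in> B \<and> y \<in> B)"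
    if r: "r \<in> {1..p}" and xy: "(x,y) \<in> match_set E s n r" for r x y
  proof -
    from xy obtain k where k: "k < n div 2^r"
      and xy': "{x,y} \<subseteq> {ko_win E s (r-1) (2*k), ko_win E s (r-1) (2*k+1)}"
      unfolding match_set_def by (auto simp: Let_def split: if_splits)
    have rS: "r = Suc (r-1)" using r by simp
    have "{x,y} \<subseteq> leaves s (r-1) (2*k) \<union> leaves s (r-1) (2*k+1)"
      using xy' ko_win_in[of E s "r-1" "2*k"] ko_win_in[of E s "r-1" "2*k+1"] by auto
    also have "\<dots> = leaves s r k" using leaves_Suc[of s "r-1" k] rS by simp
    also have "\<dots> \<subseteq> leaves s (r + (p-r)) (k div 2^(p-r))" by (rule leaves_mono)
    finally have xyL: "{x,y} \<subseteq> leaves s p (k div 2^(p-r))" using r by simp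
    have "n div 2^r = 2^(p+2-r)" using nV r by (simp add: power_diff)
    also have "\<dots> = 2^(p-r) * 4" using r by (simp add: power_add[symmetric] Suc_diff_le numeral_eq_Suc)
    finally have "k < 2^(p-r) * 4" using k by simp
    then have t4: "k div 2^(p-r) < 4" by (simp add: less_mult_imp_div_less)
    show "(x \<in> A \<union> {v} \<and> y \<in> A \<union> {v}) \<or> (x \<in> B \<and> y \<in> B)"
    proof (cases "k div 2^(p-r) = q")
      case True then show ?thesis using xyL LB by auto
    next
      case False then show ?thesis using xyL other[OF t4 False] by blast
    qed
  qed
  have part3: "\<forall>r\<in>{1..p}. \<forall>(x,y)\<in>match_set E s n r. (x \<in> A \<union> {v} \<and> y \<in> A \<union> {v}) \<or> (x \<in> B \<and> y \<in> B)"
    using part3' by blast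
  define P where "P = match_players (match_set E s n (p+1))"
  have "n div 2^(p+1) = 2" using nV by simp
  then have Peq: "P = ko_win E s p ` {..<4}" unfolding P_def using mp_eq[of E s n "p+1"] by simp
  have bP: "b \<in> P" using Peq q4 iq(3) ip by auto
  have aP: "a \<in> P"
  proof -
    have "q div 2 < 2" using q4 by simp
    then have "2*(q div 2) < 4" "2*(q div 2)+1 < 4" by auto
    then show ?thesis using ko_win_Suc_in[of E s p "q div 2"] iq(4) ip Peq by auto
  qed
  have vP: "v \<in> P"
  proof -
    have "v \<in> {ko_win E s (Suc p) 0, ko_win E s (Suc p) 1}" using ko_win_Suc_in[of E s "Suc p" 0] kv by simp
    then show ?thesis using ko_win_Suc_in[of E s p 0] ko_win_Suc_in[of E s p 1] Peq by auto
  qed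
  have injP: "inj_on (ko_win E s p) {..<4}"
  proof (rule inj_onI, rule ccontr)
    fix t t' assume h: "t \<in> {..<4::nat}" "t' \<in> {..<4}" "ko_win E s p t = ko_win E s p t'" "t \<noteq> t'"
    then show False using leaves_disj[OF inj h(4) tr tr] ko_win_in[of E s p t] ko_win_in[of E s p t'] by auto
  qed
  have cP: "card P = 4" using Peq card_image[OF injP] by simp
  have PB: "P \<inter> B = {b}"
  proof
    show "P \<inter> B \<subseteq> {b}"
    proof
      fix x assume x: "x \<in> P \<inter> B"
      then obtain t where t: "t < 4" "x = ko_win E s p t" using Peq by auto
      show "x \<in> {b}"
      proof (cases "t = q")
        case True then show ?thesis using t iq(3) ip by simp
      next
        case False then show ?thesis using other[OF t(1) False] ko_win_in[of E s p t] t x by auto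
      qed
    qed
  qed (use bP sp(2) in auto)
  have PA: "P \<inter> A = P - {b, v}"
  proof
    show "P \<inter> A \<subseteq> P - {b, v}" using AB sp(2) vA by auto
    show "P - {b, v} \<subseteq> P \<inter> A"
    proof
      fix x assume x: "x \<in> P - {b, v}"
      then obtain t where t: "t < 4" "x = ko_win E s p t" using Peq by auto
      have "t \<noteq> q" using t x iq(3) ip by auto
      then show "x \<in> P \<inter> A" using other[OF t(1)] ko_win_in[of E s p t] t x by auto
    qed
  qed
  have "b \<noteq> v" using sp(2) vB by auto
  then have "card (P - {b, v}) = 2" using cP bP vP by (simp add: card_Diff_subset)
  then show ?thesis using PB PA aP part3 unfolding P_def A_def B_def n_def by simp
qed

end
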